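(* Let $\gamma\in(1,3)$ and $\mu\in(0,1)$, and let $D=(U_D,H_D)=\big(\frac{2}{3-\gamma},(\frac{\gamma-1}{3-\gamma})^2\big)$. Among the integral curves of $\frac{dH}{dU}=\frac{F(H,U)}{G(H,U)}$ passing through $D$, there is exactly one with $\frac{dH}{dU}\big|_{U=U_D}=C_1:=\frac{(\gamma-1)^2}{3-\gamma}$, namely the special solution $H(U)=\frac{(\gamma-1)^2}{4}U^2$. All other integral curves passing through $D$ satisfy $\frac{dH}{dU}\big|_{U=U_D}=C_2$, where \[ C_2:=\frac{(\gamma-1)\big[-(\gamma-3)^2\mu+\gamma^2-2\gamma+5\big]}{2(3-\gamma)[(\gamma-3)\mu+2]}. \]
   Context: $k_1=\frac{(\gamma+1)+\mu(3-\gamma)}{2}$, $k_2=\frac{2(1-\mu)}{\gamma-1}$, $F(H,U)=2H[H-(U^2-k_1U+\mu)]$, $G(H,U)=H(U+k_2)-U(U-1)(U-\mu)$. An integral curve passing through $D$ is a trajectory of the planar system $\frac{dH}{ds}=F(H,U)$, $\frac{dU}{ds}=G(H,U)$ converging to $D$ (the point $D$ is an equilibrium, with $F=G=0$ and $(U_D-1)^2-H_D=0$). *)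

theory Defs
  imports "HOL-Analysis.Analysis"
begin

definition k1 :: "real \<Rightarrow> real \<Rightarrow> real" where
  "k1 \<gamma> \<mu> = ((\<gamma> + 1) + \<mu> * (3 - \<gamma>)) / 2"

definition k2 :: "real \<Rightarrow> real \<Rightarrow> real" where
  "k2 \<gamma> \<mu> = 2 * (1 - \<mu>) / (\<gamma> - 1)"

definition Ffun :: "real \<Rightarrow> real \<Rightarrow> real \<Rightarrow> real \<Rightarrow> real" where
  "Ffun \<gamma> \<mu> H U = 2 * H * (H - (U^2 - k1 \<gamma> \<mu> * U + \<mu>))"

definition Gfun :: "real \<Rightarrow> real \<Rightarrow> real \<Rightarrow> real \<Rightarrow> real" where
  "Gfun \<gamma> \<mu> H U = H * (U + k2 \<gamma> \<mu>) - U * (U - 1) * (U - \<mu>)"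

definition U_D :: "real \<Rightarrow> real" where
  "U_D \<gamma> = 2 / (3 - \<gamma>)"

definition H_D :: "real \<Rightarrow> real" where
  "H_D \<gamma> = ((\<gamma> - 1) / (3 - \<gamma>))^2"

definition C1 :: "real \<Rightarrow> real" where
  "C1 \<gamma> = (\<gamma> - 1)^2 / (3 - \<gamma>)"

definition C2 :: "real \<Rightarrow> real \<Rightarrow> real" where
  "C2 \<gamma> \<mu> = (\<gamma> - 1) * (- ((\<gamma> - 3)^2 * \<mu>) + \<gamma>^2 - 2 * \<gamma> + 5)
                 / (2 * (3 - \<gamma>) * ((\<gamma> - 3) * \<mu> + 2))"

text \<open>A (non-stationary) trajectory of dH/ds = F, dU/ds = G converging to D as the
  parameter tends along the filter L (L = at_top: s \<rightarrow> +\<infinity>; L = at_bot: s \<rightarrow> -\<infinity>).\<close>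
definition integral_curve_to_D ::
  "real \<Rightarrow> real \<Rightarrow> (real \<Rightarrow> real) \<Rightarrow> (real \<Rightarrow> real) \<Rightarrow> real filter \<Rightarrow> bool" where
  "integral_curve_to_D \<gamma> \<mu> H U L \<longleftrightarrow>
     (\<forall>\<^sub>F s in L. (H has_real_derivative Ffun \<gamma> \<mu> (H s) (U s)) (at s)
                 \<and> (U has_real_derivative Gfun \<gamma> \<mu> (H s) (U s)) (at s)
                 \<and> (H s, U s) \<noteq> (H_D \<gamma>, U_D \<gamma>))
     \<and> (H \<longlongrightarrow> H_D \<gamma>) L \<and> (U \<longlongrightarrow> U_D \<gamma>) L"

definition slope_at_D ::
  "real \<Rightarrow> (real \<Rightarrow> real) \<Rightarrow> (real \<Rightarrow> real) \<Rightarrow> real filter \<Rightarrow> real \<Rightarrow> bool" where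
  "slope_at_D \<gamma> H U L c \<longleftrightarrow>
     ((\<lambda>s. (H s - H_D \<gamma>) / (U s - U_D \<gamma>)) \<longlongrightarrow> c) L"

definition on_special_solution ::
  "real \<Rightarrow> (real \<Rightarrow> real) \<Rightarrow> (real \<Rightarrow> real) \<Rightarrow> real filter \<Rightarrow> bool" where
  "on_special_solution \<gamma> H U L \<longleftrightarrow> (\<forall>\<^sub>F s in L. H s = (\<gamma> - 1)^2 / 4 * (U s)^2)"

end

theory Submission
  imports Defs "HOL-Real_Asymp.Real_Asymp"
begin

definition cc :: "real \<Rightarrow> real" where "cc g = (g-1)^2/4"
definition U2 :: "real \<Rightarrow> real \<Rightarrow> real" where "U2 g m = 2*m/(g+1)"
definition Aco :: "real \<Rightarrow> real \<Rightarrow> real \<Rightarrow> real \<Rightarrow> real" where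
  "Aco g m w U = 2*w + 2*((cc g - 1)*U^2 + (1+m)*U - m)"
definition Pco :: "real \<Rightarrow> real \<Rightarrow> real \<Rightarrow> real" where
  "Pco g m U = (cc g - 1)*U*(U - U2 g m)"

lemma I1:
  assumes "1 < g" "g < 3"
  shows "Ffun g m H U - 2*cc g*U*Gfun g m H U = (H - cc g*U^2) * Aco g m (H - cc g*U^2) U"
proof -
  have "g - 1 \<noteq> 0" using assms by auto
  then have rel: "k1 g m = cc g * k2 g m + 1 + m" unfolding cc_def k1_def k2_def
    by (simp add: field_simps power2_eq_square)
  show ?thesis unfolding Ffun_def Gfun_def Aco_def rel
    by (simp add: algebra_simps power2_eq_square power3_eq_cube)
qed

lemma I2:
  assumes "1 < g" "g < 3"
  shows "Gfun g m H U = (H - cc g*U^2)*(U + k2 g m) + Pco g m U * (U - U_D g)"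
proof -
  have "g - 1 \<noteq> 0" "3 - g \<noteq> 0" "g+1 \<noteq> 0" using assms by auto
  then have e: "k2 g m * (g-1) = 2*(1-m)" "U_D g * (3-g) = 2" "U2 g m * (g+1) = 2*m"
    unfolding k2_def U_D_def U2_def by (auto simp: field_simps)
  have "cc g * 4 = (g-1)^2" unfolding cc_def by simp
  then show ?thesis unfolding Gfun_def Pco_def using e
    by algebra
qed

lemma I3: assumes "1 < g" "g < 3" shows "H_D g = cc g * (U_D g)^2"
proof -
  have "3 - g \<noteq> 0" using assms by auto
  then show ?thesis unfolding H_D_def cc_def U_D_def by (simp add: power_divide)
qed

lemma Ia: assumes "1 < g" "g < 3" shows "Aco g m 0 (U_D g) = -2*(g-1)*(1-m)/(3-g)"
proof -
  have n: "3 - g \<noteq> 0" using assms by auto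
  then have e: "U_D g * (3-g) = 2" unfolding U_D_def by (auto simp: field_simps)
  have "cc g * 4 = (g-1)^2" unfolding cc_def by simp
  then have "Aco g m 0 (U_D g) * (3-g) = -2*(g-1)*(1-m)" unfolding Aco_def using e by algebra
  then show ?thesis using n by (simp add: field_simps)
qed

lemma Ib: assumes "1 < g" "g < 3" shows "Pco g m (U_D g) = -(4-(3-g)*(1+m))/(3-g)"
proof -
  have n: "3 - g \<noteq> 0" "g+1 \<noteq> 0" using assms by auto
  then have e: "U_D g * (3-g) = 2" "U2 g m * (g+1) = 2*m" unfolding U_D_def U2_def by (auto simp: field_simps)
  have "cc g * 4 = (g-1)^2" unfolding cc_def by simp
  then have "Pco g m (U_D g) * (3-g) = -(4-(3-g)*(1+m))" unfolding Pco_def using e by algebra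
  then show ?thesis using n by (simp add: field_simps)
qed

lemma IC1: assumes "1 < g" "g < 3" shows "2*cc g*U_D g = C1 g"
proof -
  have n: "3 - g \<noteq> 0" using assms by auto
  then show ?thesis unfolding C1_def cc_def U_D_def by (simp add: field_simps)
qed

lemma Iee: assumes "1 < g" "g < 3" 
  shows "U_D g + k2 g m = 2*((g-3)*m+2)/((3-g)*(g-1))"
proof -
  have n: "3 - g \<noteq> 0" "g-1 \<noteq> 0" using assms by auto
  then show ?thesis unfolding k2_def U_D_def by (simp add: field_simps)
qed

lemma IC2: assumes "1 < g" "g < 3" "0<m" "m<1"
  shows "(Aco g m 0 (U_D g) - Pco g m (U_D g))/(U_D g + k2 g m) + C1 g = C2 g m"
proof -
  have "(3-g)*m < (3-g)*1" using assms by (intro mult_strict_left_mono) auto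
  then have d: "(g-3)*m+2 > 0" using assms by (simp add: algebra_simps)
  have n: "3 - g \<noteq> 0" "g-1 \<noteq> 0" "(g-3)*m+2 \<noteq> 0" using assms d by auto
  define X where "X = -2*(g-1)*(1-m) + 4 - (3-g)*(1+m)"
  have "Aco g m 0 (U_D g) - Pco g m (U_D g) = X/(3-g)"
    unfolding Ia[OF assms(1,2)] Ib[OF assms(1,2)] X_def
    by (simp only: diff_divide_distrib[symmetric]) (simp add: algebra_simps)
  moreover have "X/(3-g) / (2*((g-3)*m+2)/((3-g)*(g-1))) = X*(g-1)/(2*((g-3)*m+2))"
  proof -
    have "X/(3-g) * ((3-g)*(g-1)) = X*(g-1)" using n by simp
    then show ?thesis by (simp add: divide_divide_eq_right)
  qed
  ultimately have "(Aco g m 0 (U_D g) - Pco g m (U_D g))/(U_D g + k2 g m) = X*(g-1)/(2*((g-3)*m+2))"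
    unfolding Iee[OF assms(1,2)] by simp
  also have "\<dots> + C1 g = (X*(g-1)*(3-g) + 2*((g-3)*m+2)*(g-1)^2)/(2*((g-3)*m+2)*(3-g))"
    unfolding C1_def using n by (simp add: field_simps)
  also have "\<dots> = C2 g m" unfolding C2_def X_def by (rule arg_cong2[where f="(/)"]) (simp_all add: algebra_simps power2_eq_square)
  finally show ?thesis .
qed

lemma signs: assumes "1 < g" "g < 3" "0<m" "m<1"
  shows "Aco g m 0 (U_D g) < 0" "Pco g m (U_D g) - Aco g m 0 (U_D g) < 0" "Pco g m (U_D g) < 0"
    "U_D g + k2 g m > 0" "cc g < 1" "0 < U2 g m" "U2 g m < U_D g" "1 < U_D g" "0 < cc g"
proof -
  have "(3-g)*m < (3-g)*1" using assms by (intro mult_strict_left_mono) auto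
  then have d: "(g-3)*m+2 > 0" using assms by (simp add: algebra_simps)
  show "Aco g m 0 (U_D g) < 0" unfolding Ia[OF assms(1,2)] using assms
    by (intro divide_neg_pos mult_neg_pos) auto
  have "Pco g m (U_D g) - Aco g m 0 (U_D g) = (-1 + 3*m) - 4*m/(3-g)"
    unfolding Ia[OF assms(1,2)] Ib[OF assms(1,2)]
    apply (simp only: diff_divide_distrib[symmetric])
    using assms by (simp add: field_simps)
  moreover have "4*m/(3-g) > 2*m" using assms by (simp add: field_simps)
  ultimately show "Pco g m (U_D g) - Aco g m 0 (U_D g) < 0" using assms by linarith
  have "(3-g)*(1+m) < 2*2" using assms by (intro mult_strict_mono) auto
  then have "4-(3-g)*(1+m) > 0" by simp
  then show "Pco g m (U_D g) < 0" unfolding Ib[OF assms(1,2)] using assms by (simp add: divide_less_0_iff)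
  show "U_D g + k2 g m > 0" unfolding Iee[OF assms(1,2)] using assms d by simp
  have "(g-1)^2 < 2^2" using assms by (intro power_strict_mono) auto
  then show "cc g < 1" unfolding cc_def by simp
  show "0 < U2 g m" unfolding U2_def using assms by simp
  show "1 < U_D g" unfolding U_D_def using assms by simp
  have "U2 g m < 1" unfolding U2_def using assms by simp
  then show "U2 g m < U_D g" using \<open>1 < U_D g\<close> by simp
  show "0 < cc g" unfolding cc_def using assms by simp
qed

lemma sq_noninc:
  fixes f A :: "real \<Rightarrow> real"
  assumes "\<And>s. a \<le> s \<Longrightarrow> s \<le> b \<Longrightarrow> (f has_real_derivative f s * A s) (at s)"
    "\<And>s. a \<le> s \<Longrightarrow> s \<le> b \<Longrightarrow> A s \<le> 0" "a \<le> b"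
  shows "f b * f b \<le> f a * f a"
proof -
  have "(\<lambda>s. f s * f s) b \<le> (\<lambda>s. f s * f s) a"
  proof (rule DERIV_nonpos_imp_nonincreasing[OF assms(3)])
    fix x assume x: "a \<le> x" "x \<le> b"
    have "((\<lambda>s. f s * f s) has_real_derivative (f x * A x * f x + f x * (f x * A x))) (at x)"
      using DERIV_mult[OF assms(1)[OF x] assms(1)[OF x]] by (simp add: algebra_simps)
    moreover have "f x * A x * f x + f x * (f x * A x) \<le> 0"
    proof -
      have "f x * A x * f x + f x * (f x * A x) = 2 * (f x * f x) * A x" by (simp add: algebra_simps)
      also have "\<dots> \<le> 0" using assms(2)[OF x] by (simp add: mult_nonneg_nonpos)
      finally show ?thesis .
    qed
    ultimately show "\<exists>y. ((\<lambda>s. f s * f s) has_real_derivative y) (at x) \<and> y \<le> 0" by blast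
  qed
  then show ?thesis by simp
qed

lemma exp_decay_ev:
  fixes k C :: real assumes "k > 0" "C > 0"
  shows "\<forall>\<^sub>F s in at_top. B * exp (k * (s1 - s)) \<le> C"
proof -
  have "((\<lambda>s. B * exp (k * (s1 - s))) \<longlongrightarrow> 0) at_top" using assms(1) by real_asymp
  then have "\<forall>\<^sub>F s in at_top. B * exp (k * (s1 - s)) < C" using assms(2) by (rule order_tendstoD(2))
  then show ?thesis by (rule eventually_mono) simp
qed

lemma lin_gronwall:
  fixes V V' :: "real \<Rightarrow> real"
  assumes "k > 0" "K > 0"
    "\<And>s. s \<ge> tz \<Longrightarrow> (V has_real_derivative V' s) (at s)"
    "\<And>s. s \<ge> tz \<Longrightarrow> V' s \<le> - k * V s + K"
  shows "\<forall>\<^sub>F s in at_top. V s \<le> 2 * K / k"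
proof -
  define Y where "Y s = (V s - K/k) * exp (k * s)" for s
  have mono: "Y s \<le> Y tz" if "s \<ge> tz" for s
  proof (rule DERIV_nonpos_imp_nonincreasing[OF that])
    fix x assume x: "tz \<le> x" "x \<le> s"
    have "(Y has_real_derivative (V' x - 0) * exp (k * x) + (V x - K/k) * (exp (k*x) * (k * 1))) (at x)"
      unfolding Y_def using assms(3)[of x] x
      by (auto intro!: derivative_eq_intros simp: algebra_simps)
    moreover have "(V' x - 0) * exp (k * x) + (V x - K/k) * (exp (k*x) * (k * 1)) = (V' x + k * V x - K) * exp (k*x)"
      using assms(1) by (simp add: field_simps)
    moreover have "(V' x + k * V x - K) * exp (k*x) \<le> 0"
      using assms(4)[of x] x by (intro mult_nonpos_nonneg) auto
    ultimately show "\<exists>y. (Y has_real_derivative y) (at x) \<and> y \<le> 0" by auto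
  qed
  have bnd: "V s \<le> K/k + (V tz - K/k) * exp (k * (tz - s))" if "s \<ge> tz" for s
  proof -
    have "(V s - K/k) * exp (k * s) \<le> (V tz - K/k) * exp (k * tz)" using mono[OF that] unfolding Y_def .
    then have "(V s - K/k) \<le> (V tz - K/k) * exp (k * tz) / exp (k * s)" by (simp add: field_simps)
    also have "\<dots> = (V tz - K/k) * exp (k * (tz - s))" by (simp add: right_diff_distrib exp_diff)
    finally show ?thesis by simp
  qed
  have "\<forall>\<^sub>F s in at_top. (V tz - K/k) * exp (k * (tz - s)) \<le> K/k"
    by (rule exp_decay_ev) (use assms in auto)
  moreover have "\<forall>\<^sub>F s in at_top. s \<ge> tz" by (rule eventually_ge_at_top)
  ultimately show ?thesis
  proof eventually_elim
    case (elim s)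
    have "V s \<le> K/k + (V tz - K/k) * exp (k * (tz - s))" using bnd elim by auto
    also have "\<dots> \<le> K/k + K/k" using elim by simp
    finally show ?case by simp
  qed
qed

lemma rho_to_zero:
  fixes \<rho> \<beta> \<delta> :: "real \<Rightarrow> real"
  assumes m: "m > 0"
    and d: "\<And>s. s \<ge> s0 \<Longrightarrow> (\<rho> has_real_derivative \<beta> s * \<rho> s + \<delta> s) (at s)"
    and b: "\<And>s. s \<ge> s0 \<Longrightarrow> \<beta> s \<le> - m"
    and dl: "(\<delta> \<longlongrightarrow> 0) at_top"
  shows "(\<rho> \<longlongrightarrow> 0) at_top"
proof (rule tendstoI)
  fix e :: real assume e: "e > 0"
  define \<eta> where "\<eta> = e * m / 2"
  have \<eta>: "\<eta> > 0" using e m by (simp add: \<eta>_def)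
  have "\<forall>\<^sub>F s in at_top. dist (\<delta> s) 0 < \<eta>" using dl \<eta> by (rule tendstoD)
  moreover have "\<forall>\<^sub>F s in at_top. s \<ge> s0" by (rule eventually_ge_at_top)
  ultimately have "\<forall>\<^sub>F s in at_top. s \<ge> s0 \<and> \<bar>\<delta> s\<bar> < \<eta>" by eventually_elim auto
  then obtain s1 where s1: "\<And>s. s \<ge> s1 \<Longrightarrow> s \<ge> s0 \<and> \<bar>\<delta> s\<bar> < \<eta>" 
    by (auto simp: eventually_at_top_linorder)
  have "\<forall>\<^sub>F s in at_top. \<rho> s * \<rho> s \<le> 2 * (\<eta>^2/m) / m"
  proof (rule lin_gronwall[where tz=s1 and V' = "\<lambda>s. \<rho> s * (\<beta> s * \<rho> s + \<delta> s) + (\<beta> s * \<rho> s + \<delta> s) * \<rho> s"])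
    show "m > 0" "\<eta>^2/m > 0" using m \<eta> by auto
    fix s assume s: "s \<ge> s1"
    show "((\<lambda>s. \<rho> s * \<rho> s) has_real_derivative \<rho> s * (\<beta> s * \<rho> s + \<delta> s) + (\<beta> s * \<rho> s + \<delta> s) * \<rho> s) (at s)"
      using DERIV_mult[OF d d, of s] s1[OF s] by (simp add: algebra_simps)
    have bs: "\<beta> s \<le> -m" using b s1[OF s] by auto
    have ds: "\<bar>\<delta> s\<bar> < \<eta>" using s1[OF s] by auto
    have "\<rho> s * (\<beta> s * \<rho> s + \<delta> s) + (\<beta> s * \<rho> s + \<delta> s) * \<rho> s
        = 2 * \<beta> s * (\<rho> s * \<rho> s) + 2 * (\<rho> s * \<delta> s)" by (simp add: algebra_simps)
    also have "\<dots> \<le> 2 * (-m) * (\<rho> s * \<rho> s) + 2 * (\<bar>\<rho> s\<bar> * \<eta>)"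
    proof -
      have A: "2 * \<beta> s * (\<rho> s * \<rho> s) \<le> 2 * (-m) * (\<rho> s * \<rho> s)"
        using bs by (intro mult_right_mono) auto
      have "\<rho> s * \<delta> s \<le> \<bar>\<rho> s * \<delta> s\<bar>" by simp
      also have "\<dots> = \<bar>\<rho> s\<bar> * \<bar>\<delta> s\<bar>" by (simp add: abs_mult)
      also have "\<dots> \<le> \<bar>\<rho> s\<bar> * \<eta>" using ds by (intro mult_left_mono) auto
      finally show ?thesis using A by linarith
    qed
    also have "\<dots> \<le> - m * (\<rho> s * \<rho> s) + \<eta>^2/m"
    proof -
      have "0 \<le> (m * \<bar>\<rho> s\<bar> - \<eta>)^2" by simp
      then have "2 * m * (\<bar>\<rho> s\<bar> * \<eta>) \<le> m * m * (\<bar>\<rho> s\<bar> * \<bar>\<rho> s\<bar>) + \<eta>^2"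
        by (simp add: power2_eq_square algebra_simps)
      then have "2 * (\<bar>\<rho> s\<bar> * \<eta>) \<le> m * (\<rho> s * \<rho> s) + \<eta>^2 / m"
        using m by (simp add: field_simps abs_mult_self_eq)
      then show ?thesis by simp
    qed
    finally show "\<rho> s * (\<beta> s * \<rho> s + \<delta> s) + (\<beta> s * \<rho> s + \<delta> s) * \<rho> s \<le> - m * (\<rho> s * \<rho> s) + \<eta>^2/m" .
  qed
  then show "\<forall>\<^sub>F s in at_top. dist (\<rho> s) 0 < e"
  proof eventually_elim
    case (elim s)
    have h: "2 * (\<eta>^2/m) / m = e^2/2" using m by (simp add: \<eta>_def power2_eq_square field_simps)
    have "\<rho> s * \<rho> s \<le> e^2/2" using elim unfolding h .
    moreover have "e^2/2 < e^2" using e by simp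
    ultimately have "\<bar>\<rho> s\<bar>^2 < e^2" by (simp add: power2_eq_square)
    then have "\<bar>\<rho> s\<bar> < e" using e by (metis abs_ge_zero less_imp_le power_less_imp_less_base)
    then show ?case by simp
  qed
qed

lemma deriv_w:
  assumes "1<g" "g<3" "(H has_real_derivative Ffun g m (H s) (U s)) (at s)"
    "(U has_real_derivative Gfun g m (H s) (U s)) (at s)"
  shows "((\<lambda>s. H s - cc g * (U s)^2) has_real_derivative
           (H s - cc g*(U s)^2) * Aco g m (H s - cc g*(U s)^2) (U s)) (at s)"
proof -
  have "((\<lambda>s. H s - cc g * (U s)^2) has_real_derivative
           Ffun g m (H s) (U s) - 2*cc g*U s*Gfun g m (H s) (U s)) (at s)"
    using assms(3,4) by (auto intro!: derivative_eq_intros simp: algebra_simps)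
  then show ?thesis unfolding I1[OF assms(1,2)] .
qed

lemma deriv_u:
  assumes "1<g" "g<3" "(U has_real_derivative Gfun g m (H s) (U s)) (at s)"
  shows "((\<lambda>s. U s - U_D g) has_real_derivative
           (H s - cc g*(U s)^2) * (U s + k2 g m) + Pco g m (U s) * (U s - U_D g)) (at s)"
proof -
  have "((\<lambda>s. U s - U_D g) has_real_derivative Gfun g m (H s) (U s)) (at s)"
    using assms(3) by (auto intro!: derivative_eq_intros)
  then show ?thesis unfolding I2[OF assms(1,2)] .
qed

lemma limits:
  assumes "1<g" "g<3" "(H \<longlongrightarrow> H_D g) F" "(U \<longlongrightarrow> U_D g) F"
  shows "((\<lambda>s. H s - cc g * (U s)^2) \<longlongrightarrow> 0) F"
    "((\<lambda>s. Aco g m (H s - cc g * (U s)^2) (U s)) \<longlongrightarrow> Aco g m 0 (U_D g)) F"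
    "((\<lambda>s. Pco g m (U s)) \<longlongrightarrow> Pco g m (U_D g)) F"
proof -
  have "((\<lambda>s. H s - cc g * (U s)^2) \<longlongrightarrow> H_D g - cc g * (U_D g)^2) F"
    using assms(3,4) by (intro tendsto_intros)
  then show w: "((\<lambda>s. H s - cc g * (U s)^2) \<longlongrightarrow> 0) F" using I3[OF assms(1,2)] by simp
  show "((\<lambda>s. Aco g m (H s - cc g * (U s)^2) (U s)) \<longlongrightarrow> Aco g m 0 (U_D g)) F"
    unfolding Aco_def using w assms(4) by (intro tendsto_intros)
  show "((\<lambda>s. Pco g m (U s)) \<longlongrightarrow> Pco g m (U_D g)) F"
    unfolding Pco_def using assms(4) by (intro tendsto_intros)
qed

lemma no_at_bot:
  assumes P: "1<g" "g<3" "0<m" "m<1" and C: "integral_curve_to_D g m H U at_bot"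
  shows False
proof -
  define w where "w s = H s - cc g * (U s)^2" for s
  define u where "u s = U s - U_D g" for s
  define A where "A s = Aco g m (w s) (U s)" for s
  have ev: "\<forall>\<^sub>F s in at_bot. (H has_real_derivative Ffun g m (H s) (U s)) (at s)
                 \<and> (U has_real_derivative Gfun g m (H s) (U s)) (at s)
                 \<and> (H s, U s) \<noteq> (H_D g, U_D g)" and lH: "(H \<longlongrightarrow> H_D g) at_bot" and lU: "(U \<longlongrightarrow> U_D g) at_bot"
    using C unfolding integral_curve_to_D_def by auto
  note L = limits(1)[OF P(1,2) lH lU] limits(2)[OF P(1,2) lH lU, where m=m] limits(3)[OF P(1,2) lH lU, where m=m]
  have "\<forall>\<^sub>F s in at_bot. A s < 0" unfolding A_def w_def
    using L(2) signs(1)[OF P] by (rule order_tendstoD)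
  moreover have "\<forall>\<^sub>F s in at_bot. Pco g m (U s) < 0"
    using L(3) signs(3)[OF P] by (rule order_tendstoD)
  ultimately have "\<forall>\<^sub>F s in at_bot. ((H has_real_derivative Ffun g m (H s) (U s)) (at s)
                 \<and> (U has_real_derivative Gfun g m (H s) (U s)) (at s)
                 \<and> (H s, U s) \<noteq> (H_D g, U_D g)) \<and> A s < 0 \<and> Pco g m (U s) < 0"
    using ev by eventually_elim auto
  then obtain s0 where s0: "\<And>s. s \<le> s0 \<Longrightarrow> ((H has_real_derivative Ffun g m (H s) (U s)) (at s)
                 \<and> (U has_real_derivative Gfun g m (H s) (U s)) (at s)
                 \<and> (H s, U s) \<noteq> (H_D g, U_D g)) \<and> A s < 0 \<and> Pco g m (U s) < 0"
    by (auto simp: eventually_at_bot_linorder)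
  have dw: "(w has_real_derivative w s * A s) (at s)" if "s \<le> s0" for s
    using deriv_w[OF P(1,2), of H m s U] s0[OF that] unfolding w_def[abs_def] A_def w_def by auto
  have w0: "w x = 0" if "x \<le> s0" for x
  proof -
    have "((\<lambda>s. w s * w s) \<longlongrightarrow> 0 * 0) at_bot" using L(1) unfolding w_def[symmetric] 
      by (intro tendsto_intros) auto
    moreover have "\<forall>\<^sub>F y in at_bot. w x * w x \<le> w y * w y"
      unfolding eventually_at_bot_linorder
    proof (intro exI allI impI)
      fix y assume yx: "y \<le> x"
      show "w x * w x \<le> w y * w y"
      proof (rule sq_noninc[where f=w and A=A and a=y and b=x])
        fix s assume "y \<le> s" "s \<le> x"
        then have "s \<le> s0" using that by auto
        then show "(w has_real_derivative w s * A s) (at s)" using dw by auto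
      next
        fix s assume "y \<le> s" "s \<le> x"
        then have "s \<le> s0" using that by auto
        then show "A s \<le> 0" using s0 by (auto intro: less_imp_le)
      qed (rule yx)
    qed
    ultimately have "w x * w x \<le> 0 * 0" by (intro tendsto_lowerbound) auto
    then have "w x * w x = 0" using zero_le_square[of "w x"] by linarith
    then show ?thesis by simp
  qed
  have du: "(u has_real_derivative u s * Pco g m (U s)) (at s)" if "s \<le> s0" for s
    using deriv_u[OF P(1,2), of U m H s] s0[OF that] w0[OF that] unfolding u_def[abs_def] w_def
    by (auto simp: algebra_simps)
  have "u s0 = 0"
  proof -
    have "(u \<longlongrightarrow> U_D g - U_D g) at_bot" unfolding u_def[abs_def] using lU by (intro tendsto_intros)
    then have "((\<lambda>s. u s * u s) \<longlongrightarrow> 0 * 0) at_bot" by (intro tendsto_intros) auto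
    moreover have "\<forall>\<^sub>F y in at_bot. u s0 * u s0 \<le> u y * u y"
      unfolding eventually_at_bot_linorder
    proof (intro exI allI impI)
      fix y assume ys: "y \<le> s0"
      show "u s0 * u s0 \<le> u y * u y"
      proof (rule sq_noninc[where f=u and A="\<lambda>s. Pco g m (U s)" and a=y and b=s0])
        fix s assume "y \<le> s" "s \<le> s0"
        then show "(u has_real_derivative u s * Pco g m (U s)) (at s)" using du by auto
      next
        fix s assume "y \<le> s" "s \<le> s0"
        then show "Pco g m (U s) \<le> 0" using s0 by (auto intro: less_imp_le)
      qed (rule ys)
    qed
    ultimately have "u s0 * u s0 \<le> 0 * 0" by (intro tendsto_lowerbound) auto
    then have "u s0 * u s0 = 0" using zero_le_square[of "u s0"] by linarith
    then show ?thesis by simp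
  qed
  then have "U s0 = U_D g" "H s0 = H_D g" using w0[of s0] I3[OF P(1,2)] unfolding u_def w_def by auto
  then show False using s0[of s0] by auto
qed

lemma at_top_case:
  assumes P: "1<g" "g<3" "0<m" "m<1" and C: "integral_curve_to_D g m H U at_top"
  shows "(slope_at_D g H U at_top (C1 g) \<longleftrightarrow> on_special_solution g H U at_top)
       \<and> (\<not> on_special_solution g H U at_top \<longrightarrow> slope_at_D g H U at_top (C2 g m))"
proof -
  define w where "w s = H s - cc g * (U s)^2" for s
  define u where "u s = U s - U_D g" for s
  define A where "A s = Aco g m (w s) (U s)" for s
  define aa where "aa = Aco g m 0 (U_D g)"
  define bb where "bb = Pco g m (U_D g)"
  define ee where "ee = U_D g + k2 g m"
  define \<beta> where "\<beta> s = Pco g m (U s) - A s" for s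
  note sg = signs[OF P]
  have ab: "bb - aa < 0" and eep: "ee > 0" using sg unfolding aa_def bb_def ee_def by auto
  have ev: "\<forall>\<^sub>F s in at_top. (H has_real_derivative Ffun g m (H s) (U s)) (at s)
                 \<and> (U has_real_derivative Gfun g m (H s) (U s)) (at s)
                 \<and> (H s, U s) \<noteq> (H_D g, U_D g)" and lH: "(H \<longlongrightarrow> H_D g) at_top" and lU: "(U \<longlongrightarrow> U_D g) at_top"
    using C unfolding integral_curve_to_D_def by auto
  note L = limits(1)[OF P(1,2) lH lU] limits(2)[OF P(1,2) lH lU, where m=m] limits(3)[OF P(1,2) lH lU, where m=m]
  have lA: "(A \<longlongrightarrow> aa) at_top" using L(2) unfolding A_def w_def aa_def .
  have lb: "(\<beta> \<longlongrightarrow> bb - aa) at_top" unfolding \<beta>_def bb_def using L(3) lA by (intro tendsto_intros)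
  have "\<forall>\<^sub>F s in at_top. A s < 0" using lA sg(1) unfolding aa_def by (rule order_tendstoD)
  moreover have "\<forall>\<^sub>F s in at_top. \<beta> s < (bb - aa)/2"
    using lb by (rule order_tendstoD) (use ab in simp)
  ultimately have "\<forall>\<^sub>F s in at_top. ((H has_real_derivative Ffun g m (H s) (U s)) (at s)
                 \<and> (U has_real_derivative Gfun g m (H s) (U s)) (at s)
                 \<and> (H s, U s) \<noteq> (H_D g, U_D g)) \<and> A s < 0 \<and> \<beta> s < (bb - aa)/2"
    using ev by eventually_elim auto
  then obtain s0 where s0: "\<And>s. s \<ge> s0 \<Longrightarrow> ((H has_real_derivative Ffun g m (H s) (U s)) (at s)
                 \<and> (U has_real_derivative Gfun g m (H s) (U s)) (at s)
                 \<and> (H s, U s) \<noteq> (H_D g, U_D g)) \<and> A s < 0 \<and> \<beta> s < (bb - aa)/2"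
    by (auto simp: eventually_at_top_linorder)
  have dw: "(w has_real_derivative w s * A s) (at s)" if "s \<ge> s0" for s
    using deriv_w[OF P(1,2), of H m s U] s0[OF that] unfolding w_def[abs_def] A_def w_def by auto
  have du: "(u has_real_derivative w s * (U s + k2 g m) + Pco g m (U s) * u s) (at s)" if "s \<ge> s0" for s
    using deriv_u[OF P(1,2), of U m H s] s0[OF that] unfolding u_def[abs_def] w_def
    by auto
  have HD: "H_D g = cc g * (U_D g)^2" by (rule I3[OF P(1,2)])
  have sp_iff: "on_special_solution g H U at_top \<longleftrightarrow> (\<forall>\<^sub>F s in at_top. w s = 0)"
    unfolding on_special_solution_def w_def cc_def by simp
  have C12: "C2 g m - C1 g = (aa - bb)/ee" using IC2[OF P] unfolding aa_def bb_def ee_def by simp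
  have C12ne: "C1 g \<noteq> C2 g m" using C12 ab eep by (auto simp: field_simps)
  show ?thesis
  proof (cases "\<exists>s1\<ge>s0. w s1 = 0")
    case True
    then obtain s1 where s1: "s1 \<ge> s0" "w s1 = 0" by auto
    have wz: "w s = 0" if "s \<ge> s1" for s
    proof -
      have "w s * w s \<le> w s1 * w s1"
      proof (rule sq_noninc[where f=w and A=A and a=s1 and b=s])
        fix x assume "s1 \<le> x" "x \<le> s"
        then show "(w has_real_derivative w x * A x) (at x)" using dw s1 by auto
      next
        fix x assume "s1 \<le> x" "x \<le> s"
        then show "A x \<le> 0" using s0[of x] s1 by (auto intro: less_imp_le)
      qed (rule that)
      then have "w s * w s = 0" using s1 zero_le_square[of "w s"] by simp
      then show ?thesis by simp
    qed
    have sp: "on_special_solution g H U at_top" unfolding sp_iff eventually_at_top_linorder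
      using wz by blast
    have "\<forall>\<^sub>F s in at_top. cc g * (U s + U_D g) = (H s - H_D g) / (U s - U_D g)"
      unfolding eventually_at_top_linorder
    proof (intro exI allI impI)
      fix s assume s: "s \<ge> max s0 s1"
      then have w0: "H s = cc g * (U s)^2" using wz[of s] unfolding w_def by auto
      have "U s \<noteq> U_D g" using s0[of s] s w0 HD by auto
      then show "cc g * (U s + U_D g) = (H s - H_D g) / (U s - U_D g)"
        unfolding w0 HD by (simp add: field_simps power2_eq_square)
    qed
    moreover have "((\<lambda>s. cc g * (U s + U_D g)) \<longlongrightarrow> cc g * (U_D g + U_D g)) at_top"
      using lU by (intro tendsto_intros)
    ultimately have "slope_at_D g H U at_top (C1 g)" unfolding slope_at_D_def
      using IC1[OF P(1,2)] by (simp add: tendsto_cong[symmetric] algebra_simps) 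
    then show ?thesis using sp by auto
  next
    case False
    then have wnz: "w s \<noteq> 0" if "s \<ge> s0" for s using that by auto
    have nsp: "\<not> on_special_solution g H U at_top"
    proof
      assume "on_special_solution g H U at_top"
      then obtain N where "\<And>s. s \<ge> N \<Longrightarrow> w s = 0" unfolding sp_iff eventually_at_top_linorder by auto
      then show False using wnz[of "max N s0"] by auto
    qed
    define r where "r s = u s / w s" for s
    define rs where "rs = ee / (aa - bb)"
    define \<delta> where "\<delta> s = (U s + k2 g m) + rs * \<beta> s" for s
    have drho: "((\<lambda>s. r s - rs) has_real_derivative \<beta> s * (r s - rs) + \<delta> s) (at s)" if "s \<ge> s0" for s
    proof -
      have "((\<lambda>s. u s / w s - rs) has_real_derivative
         ((w s * (U s + k2 g m) + Pco g m (U s) * u s) * w s - u s * (w s * A s)) / (w s * w s) - 0) (at s)"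
        by (intro DERIV_diff DERIV_divide du dw that wnz DERIV_const)
      moreover have "((w s * (U s + k2 g m) + Pco g m (U s) * u s) * w s - u s * (w s * A s)) / (w s * w s) - 0
          = \<beta> s * (r s - rs) + \<delta> s"
        unfolding \<beta>_def \<delta>_def r_def using wnz[OF that] by (simp add: field_simps)
      ultimately show ?thesis unfolding r_def by simp
    qed
    have ld: "(\<delta> \<longlongrightarrow> 0) at_top"
    proof -
      have "(\<delta> \<longlongrightarrow> (U_D g + k2 g m) + rs * (bb - aa)) at_top"
        unfolding \<delta>_def[abs_def] using lU lb by (intro tendsto_intros)
      moreover have "(U_D g + k2 g m) + rs * (bb - aa) = 0"
        unfolding rs_def ee_def[symmetric] using ab by (simp add: field_simps)
      ultimately show ?thesis by simp
    qed
    have "((\<lambda>s. r s - rs) \<longlongrightarrow> 0) at_top"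
    proof (rule rho_to_zero[of "(aa - bb)/2" s0])
      show "(aa - bb)/2 > 0" using ab by simp
      fix s assume "s \<ge> s0"
      then show "((\<lambda>s. r s - rs) has_real_derivative \<beta> s * (r s - rs) + \<delta> s) (at s)" by (rule drho)
    next
      fix s assume "s \<ge> s0"
      then show "\<beta> s \<le> - ((aa - bb) / 2)" using s0[of s] by (simp add: field_simps)
    qed (rule ld)
    then have lr: "(r \<longlongrightarrow> rs) at_top" using tendsto_add[OF _ tendsto_const[of rs]] by fastforce
    have rsp: "rs > 0" unfolding rs_def using ab eep by simp
    have "\<forall>\<^sub>F s in at_top. r s > 0" using lr rsp by (rule order_tendstoD)
    moreover have "\<forall>\<^sub>F s in at_top. s \<ge> s0" by (rule eventually_ge_at_top)
    ultimately have "\<forall>\<^sub>F s in at_top. inverse (r s) + cc g * (U s + U_D g) = (H s - H_D g) / (U s - U_D g)"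
    proof eventually_elim
      case (elim s)
      have wn: "w s \<noteq> 0" using wnz elim by auto
      have un: "u s \<noteq> 0" using elim unfolding r_def by auto
      have "H s - H_D g = w s + cc g * (U s + U_D g) * u s"
        unfolding w_def u_def HD by (simp add: algebra_simps power2_eq_square)
      then show ?case unfolding r_def using wn un unfolding u_def[symmetric] by (simp add: field_simps)
    qed
    moreover have "((\<lambda>s. inverse (r s) + cc g * (U s + U_D g)) \<longlongrightarrow> inverse rs + cc g * (U_D g + U_D g)) at_top"
      using lr lU rsp by (intro tendsto_intros) auto
    moreover have "inverse rs + cc g * (U_D g + U_D g) = C2 g m"
      using C12 IC1[OF P(1,2)] unfolding rs_def by (simp add: algebra_simps)
    ultimately have s2: "slope_at_D g H U at_top (C2 g m)" unfolding slope_at_D_def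
      by (simp add: tendsto_cong[symmetric])
    have "\<not> slope_at_D g H U at_top (C1 g)"
    proof
      assume "slope_at_D g H U at_top (C1 g)"
      then have "C1 g = C2 g m" using s2 unfolding slope_at_D_def by (rule tendsto_unique[rotated]) simp
      then show False using C12ne by simp
    qed
    then show ?thesis using nsp s2 by auto
  qed
qed

lemma existence:
  assumes P: "1<g" "g<3" "0<m" "m<1"
  shows "\<exists>H U. integral_curve_to_D g m H U at_top \<and> on_special_solution g H U at_top"
proof -
  note sg = signs[OF P]
  define c where "c = cc g"
  define D where "D = U_D g"
  define V where "V = U2 g m"
  have c1: "c - 1 < 0" and D1: "1 < D" and V0: "0 < V" and VD: "V < D"
    using sg unfolding c_def D_def V_def by auto
  define f where "f x = (c - 1) * x * (x - V) * (x - D)" for x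
  define pa where "pa = 1 / (V * D)"
  define pb where "pb = 1 / (V * (V - D))"
  define pc where "pc = 1 / (D * (D - V))"
  define \<Phi> where "\<Phi> x = (pa * ln x + pb * ln (x - V) + pc * ln (x - D)) / (c - 1)" for x
  have fneg: "f x < 0" if "x > D" for x
  proof -
    have "x * (x - V) * (x - D) > 0" using that D1 VD by simp
    then show ?thesis unfolding f_def using c1 by (simp add: mult.assoc mult_neg_pos)
  qed
  have dPhi: "(\<Phi> has_real_derivative inverse (f x)) (at x)" if x: "x > D" for x
  proof -
    have pos: "x > 0" "x - V > 0" "x - D > 0" using x D1 VD by auto
    have "(\<Phi> has_real_derivative (pa * inverse x + pb * inverse (x - V) + pc * inverse (x - D)) / (c - 1)) (at x)"
      unfolding \<Phi>_def[abs_def] using pos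
      by (auto intro!: derivative_eq_intros simp: divide_inverse)
    moreover have "(pa * inverse x + pb * inverse (x - V) + pc * inverse (x - D)) / (c - 1) = inverse (f x)"
    proof -
      have n: "V \<noteq> 0" "D \<noteq> 0" "V - D \<noteq> 0" "D - V \<noteq> 0" "x \<noteq> 0" "x - V \<noteq> 0" "x - D \<noteq> 0" "c - 1 \<noteq> 0"
        using pos V0 VD D1 c1 by auto
      have r: "pa * (V * D) = 1" "pb * (V * (V - D)) = 1" "pc * (D * (D - V)) = 1"
        unfolding pa_def pb_def pc_def using n by auto
      have key: "pa * ((x - V) * (x - D)) + pb * (x * (x - D)) + pc * (x * (x - V)) = 1"
        using r by algebra
      have "pa * inverse x + pb * inverse (x - V) + pc * inverse (x - D)
          = (pa * ((x - V) * (x - D)) + pb * (x * (x - D)) + pc * (x * (x - V))) / (x * (x - V) * (x - D))"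
        using n by (simp add: field_simps)
      also have "\<dots> = 1 / (x * (x - V) * (x - D))" unfolding key ..
      finally have e: "pa * inverse x + pb * inverse (x - V) + pc * inverse (x - D) = 1 / (x * (x - V) * (x - D))" .
      have "1 / (x * (x - V) * (x - D)) / (c - 1) = inverse ((c - 1) * x * (x - V) * (x - D))"
        by (simp add: divide_inverse inverse_mult_distrib mult_ac)
      then show ?thesis unfolding e f_def .
    qed
    ultimately show ?thesis by simp
  qed
  have cPhi: "isCont \<Phi> x" if "x > D" for x using dPhi[OF that] by (rule DERIV_isCont)
  have decr: "\<Phi> y < \<Phi> x" if "D < x" "x < y" for x y
  proof (rule DERIV_neg_imp_decreasing[OF that(2)])
    fix z assume "x \<le> z" "z \<le> y"
    then have z: "z > D" using that by auto
    show "\<exists>y. (\<Phi> has_real_derivative y) (at z) \<and> y < 0"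
      using dPhi[OF z] fneg[OF z] by auto
  qed
  have decr_le: "\<Phi> y \<le> \<Phi> x" if "D < x" "x \<le> y" for x y
    using decr[of x y] that by (cases "x = y") auto
  have lim: "filterlim \<Phi> at_top (at_right D)"
  proof -
    have "filterlim (\<lambda>x. ln (x - D)) at_bot (at_right D)" by real_asymp
    then have l1: "filterlim (\<lambda>x. - ln (x - D)) at_top (at_right D)"
      by (simp add: filterlim_uminus_at_top)
    have l2: "((\<lambda>x. (pa * ln x + pb * ln (x - V)) / (c - 1)) \<longlongrightarrow> (pa * ln D + pb * ln (D - V)) / (c - 1)) (at_right D)"
      using D1 VD c1 by (intro tendsto_intros) auto
    have pcp: "pc > 0" unfolding pc_def using D1 VD by simp
    have "filterlim (\<lambda>x. (pc / (1 - c)) * (- ln (x - D))) at_top (at_right D)"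
      by (rule filterlim_tendsto_pos_mult_at_top[OF tendsto_const _ l1]) (use pcp c1 in simp)
    then have "filterlim (\<lambda>x. (pa * ln x + pb * ln (x - V)) / (c - 1) + (pc / (1 - c)) * (- ln (x - D))) at_top (at_right D)"
      by (rule filterlim_tendsto_add_at_top[OF l2])
    moreover have "(pa * ln x + pb * ln (x - V)) / (c - 1) + (pc / (1 - c)) * (- ln (x - D)) = \<Phi> x" for x
      unfolding \<Phi>_def by (simp add: add_divide_distrib) (metis divide_minus_right minus_diff_eq)
    ultimately show ?thesis by simp
  qed
  define S0 where "S0 = \<Phi> (D + 1)"
  have ex: "\<exists>x. D < x \<and> x \<le> D + 1 \<and> \<Phi> x = s" if s: "s \<ge> S0" for s
  proof -
    have "\<forall>\<^sub>F x in at_right D. \<Phi> x \<ge> s" using lim by (simp add: filterlim_at_top)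
    moreover have "\<forall>\<^sub>F x in at_right D. x < D + 1" unfolding eventually_at_right_field by (intro exI[of _ "D + 1"]) auto
    ultimately have "\<forall>\<^sub>F x in at_right D. \<Phi> x \<ge> s \<and> x < D + 1" by eventually_elim auto
    moreover have "\<forall>\<^sub>F x in at_right D. x > D" by (rule eventually_at_right_less)
    ultimately have "\<forall>\<^sub>F x in at_right D. \<Phi> x \<ge> s \<and> x < D + 1 \<and> x > D" by eventually_elim auto
    then obtain x1 where x1: "\<Phi> x1 \<ge> s" "x1 < D + 1" "x1 > D"
      using eventually_happens'[OF trivial_limit_at_right_real] by blast
    have "\<exists>x\<ge>x1. x \<le> D + 1 \<and> \<Phi> x = s"
      by (rule IVT2) (use x1 s cPhi in \<open>auto simp: S0_def\<close>)
    then obtain x where "x \<ge> x1" "x \<le> D + 1" "\<Phi> x = s" by blast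
    then show ?thesis using x1 by (intro exI[of _ x]) auto
  qed
  have uniq: "x = y" if "D < x" "D < y" "\<Phi> x = \<Phi> y" for x y
    using decr[of x y] decr[of y x] that by (cases x y rule: linorder_cases) auto
  define Ui where "Ui s = (THE x. D < x \<and> x \<le> D + 1 \<and> \<Phi> x = s)" for s
  have Ui: "D < Ui s \<and> Ui s \<le> D + 1 \<and> \<Phi> (Ui s) = s" if sS: "s \<ge> S0" for s
  proof -
    obtain x where x: "D < x \<and> x \<le> D + 1 \<and> \<Phi> x = s" using ex[OF sS] by blast
    have "Ui s = x" unfolding Ui_def
      by (rule the_equality) (use x uniq in auto)
    then show ?thesis using x by simp
  qed
  have UiPhi: "Ui (\<Phi> x) = x" if "D < x" "x \<le> D + 1" for x
  proof -
    have "\<Phi> x \<ge> S0" unfolding S0_def using decr_le that by auto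
    then have "D < Ui (\<Phi> x)" "\<Phi> (Ui (\<Phi> x)) = \<Phi> x" using Ui by auto
    then show ?thesis using uniq that by auto
  qed
  have Uilt: "Ui s < D + 1" if "s > S0" for s
  proof -
    have "Ui s \<noteq> D + 1" using Ui[of s] that unfolding S0_def by auto
    then show ?thesis using Ui[of s] that by auto
  qed
  have dUi: "(Ui has_real_derivative f (Ui s)) (at s)" if s: "s > S0" for s
  proof -
    have u: "D < Ui s" "Ui s < D + 1" "\<Phi> (Ui s) = s" using Ui[of s] Uilt[OF s] s by auto
    define d where "d = min ((Ui s - D)/2) (D + 1 - Ui s)"
    have d: "d > 0" unfolding d_def using u by auto
    have zr: "D < z \<and> z \<le> D + 1" if zd: "\<bar>z - Ui s\<bar> \<le> d" for z
    proof -
      have "\<bar>z - Ui s\<bar> \<le> (Ui s - D)/2" "\<bar>z - Ui s\<bar> \<le> D + 1 - Ui s" using zd unfolding d_def by auto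
      moreover have "- (z - Ui s) \<le> \<bar>z - Ui s\<bar>" "z - Ui s \<le> \<bar>z - Ui s\<bar>" by (rule abs_ge_minus_self, rule abs_ge_self)
      ultimately show ?thesis using u by (intro conjI; argo)
    qed
    have "isCont Ui (\<Phi> (Ui s))"
      by (rule isCont_inverse_function[OF d]) (use zr UiPhi cPhi in auto)
    then have cont: "isCont Ui s" using u by simp
    have "(Ui has_real_derivative inverse (inverse (f (Ui s)))) (at s)"
    proof (rule DERIV_inverse_function[where a=S0 and b="s+1"])
      show "(\<Phi> has_real_derivative inverse (f (Ui s))) (at (Ui s))" using dPhi u by auto
      show "inverse (f (Ui s)) \<noteq> 0" using fneg[of "Ui s"] u by auto
      show "S0 < s" "s < s + 1" using s by auto
      fix y assume "S0 < y" "y < s + 1"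
      then show "\<Phi> (Ui y) = y" using Ui by auto
    qed (rule cont)
    then show ?thesis by simp
  qed
  define Hs where "Hs s = c * (Ui s)^2" for s
  have ODE: "(Hs has_real_derivative Ffun g m (Hs s) (Ui s)) (at s) \<and> (Ui has_real_derivative Gfun g m (Hs s) (Ui s)) (at s)
       \<and> (Hs s, Ui s) \<noteq> (H_D g, U_D g)" if s: "s > S0" for s
  proof -
    have G: "Gfun g m (Hs s) (Ui s) = f (Ui s)"
      unfolding I2[OF P(1,2)] Hs_def f_def Pco_def c_def V_def D_def by simp
    have F: "Ffun g m (Hs s) (Ui s) = 2 * c * Ui s * f (Ui s)"
      using I1[OF P(1,2), of m "Hs s" "Ui s"] G unfolding Hs_def c_def by simp
    have "(Hs has_real_derivative c * (2 * Ui s * f (Ui s))) (at s)"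
      unfolding Hs_def[abs_def] using dUi[OF s] by (auto intro!: derivative_eq_intros)
    then show ?thesis using dUi[OF s] G F Ui[of s] s unfolding D_def by (auto simp: algebra_simps)
  qed
  have lUi: "(Ui \<longlongrightarrow> D) at_top"
  proof (rule order_tendstoI)
    fix a assume "a < D"
    show "\<forall>\<^sub>F s in at_top. a < Ui s"
      using eventually_ge_at_top[of S0] by eventually_elim (use Ui \<open>a < D\<close> in force)
  next
    fix a assume a: "D < a"
    define e where "e = min (a - D) 1"
    have e: "e > 0" "D + e \<le> a" "D + e \<le> D + 1" unfolding e_def using a by auto
    show "\<forall>\<^sub>F s in at_top. Ui s < a"
      using eventually_gt_at_top[of "max S0 (\<Phi> (D + e))"]
    proof eventually_elim
      case (elim s)
      have u: "D < Ui s" "\<Phi> (Ui s) = s" using Ui[of s] elim by auto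
      have "Ui s < D + e"
      proof (rule ccontr)
        assume "\<not> Ui s < D + e"
        then have "\<Phi> (Ui s) \<le> \<Phi> (D + e)" using decr_le[of "D + e" "Ui s"] e by auto
        then show False using u elim by auto
      qed
      then show ?case using e by auto
    qed
  qed
  have lHs: "(Hs \<longlongrightarrow> H_D g) at_top"
  proof -
    have "(Hs \<longlongrightarrow> c * D^2) at_top" unfolding Hs_def[abs_def] using lUi by (intro tendsto_intros)
    then show ?thesis using I3[OF P(1,2)] unfolding c_def D_def by simp
  qed
  have "integral_curve_to_D g m Hs Ui at_top"
  proof -
    have "\<forall>\<^sub>F s in at_top. (Hs has_real_derivative Ffun g m (Hs s) (Ui s)) (at s) \<and> (Ui has_real_derivative Gfun g m (Hs s) (Ui s)) (at s)
       \<and> (Hs s, Ui s) \<noteq> (H_D g, U_D g)"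
      by (rule eventually_mono[OF eventually_gt_at_top[of S0]]) (rule ODE)
    then show ?thesis unfolding integral_curve_to_D_def using lHs lUi unfolding D_def by blast
  qed
  moreover have "on_special_solution g Hs Ui at_top"
    unfolding on_special_solution_def Hs_def c_def cc_def by simp
  ultimately show ?thesis by blast
qed

theorem lemma4p2:
  fixes \<gamma> \<mu> :: real
  assumes "1 < \<gamma>" "\<gamma> < 3" "0 < \<mu>" "\<mu> < 1"
  shows "(\<exists>H U L. L \<in> {at_top, at_bot} \<and> integral_curve_to_D \<gamma> \<mu> H U L
              \<and> on_special_solution \<gamma> H U L \<and> slope_at_D \<gamma> H U L (C1 \<gamma>))
       \<and> (\<forall>H U L. L \<in> {at_top, at_bot} \<longrightarrow> integral_curve_to_D \<gamma> \<mu> H U L \<longrightarrow>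
              (slope_at_D \<gamma> H U L (C1 \<gamma>) \<longleftrightarrow> on_special_solution \<gamma> H U L)
            \<and> (\<not> on_special_solution \<gamma> H U L \<longrightarrow> slope_at_D \<gamma> H U L (C2 \<gamma> \<mu>)))"
proof (rule conjI)
  obtain H U where HU: "integral_curve_to_D \<gamma> \<mu> H U at_top" "on_special_solution \<gamma> H U at_top"
    using existence[OF assms] by blast
  then have "slope_at_D \<gamma> H U at_top (C1 \<gamma>)" using at_top_case[OF assms HU(1)] by blast
  then show "\<exists>H U L. L \<in> {at_top, at_bot} \<and> integral_curve_to_D \<gamma> \<mu> H U L
              \<and> on_special_solution \<gamma> H U L \<and> slope_at_D \<gamma> H U L (C1 \<gamma>)"
    using HU by blast
next
  show "\<forall>H U L. L \<in> {at_top, at_bot} \<longrightarrow> integral_curve_to_D \<gamma> \<mu> H U L \<longrightarrow>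
              (slope_at_D \<gamma> H U L (C1 \<gamma>) \<longleftrightarrow> on_special_solution \<gamma> H U L)
            \<and> (\<not> on_special_solution \<gamma> H U L \<longrightarrow> slope_at_D \<gamma> H U L (C2 \<gamma> \<mu>))"
  proof (intro allI impI)
  fix H U L assume L: "L \<in> {at_top, at_bot :: real filter}" and C: "integral_curve_to_D \<gamma> \<mu> H U L"
  have "L = at_top"
  proof (rule ccontr)
    assume "L \<noteq> at_top"
    then have "L = at_bot" using L by auto
    then show False using no_at_bot[OF assms] C by blast
  qed
  then show "(slope_at_D \<gamma> H U L (C1 \<gamma>) \<longleftrightarrow> on_special_solution \<gamma> H U L)
            \<and> (\<not> on_special_solution \<gamma> H U L \<longrightarrow> slope_at_D \<gamma> H U L (C2 \<gamma> \<mu>))"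
    using at_top_case[OF assms] C by blast
  qed
qed

end
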